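(* For every $g\in G(\Gamma)$, the number of walls in $\mathbb{W}$ separating $e$ and $g$ equals $2|g|_r$; that is, $d_{\mathbb{W}}(e,g)=2|g|_r$.
   Context: $G(\Gamma)$ is the graph product of groups $\{G_v\}_{v\in\Gamma}$ over a finite simplicial graph $\Gamma$, with reduced word length $|\cdot|_r$ (length of a word in the vertex groups that cannot be shortened by swapping consecutive syllables from adjacent vertex groups, merging consecutive syllables from the same vertex group, or deleting identities). For $v\in\Gamma$, $\mathbb{A}_v=\{g:\exists g_v\in G_v,\ |g_vg|_r<|g|_r\}$, and $\mathbb{W}=\{k\mathbb{A}_v:k\in G(\Gamma),v\in\Gamma\}$, each $k\mathbb{A}_v$ regarded as the wall $(k\mathbb{A}_v,G(\Gamma)\setminus k\mathbb{A}_v)$ (distinct sets counted once). A wall separates $x,y$ if one lies in $k\mathbb{A}_v$ and the other in its complement; $d_{\mathbb{W}}(x,y)$ is the number of walls in $\mathbb{W}$ separating $x$ and $y$. *)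

theory Defs
  imports "HOL-Algebra.Group"
begin

definition gp_words :: "'v set \<Rightarrow> ('v \<Rightarrow> ('g,'b) monoid_scheme) \<Rightarrow> ('v \<times> 'g) list set" where
  "gp_words V G = {w. \<forall>(v,x)\<in>set w. v \<in> V \<and> x \<in> carrier (G v)}"

inductive gp_step :: "('v \<Rightarrow> 'v \<Rightarrow> bool) \<Rightarrow> ('v \<Rightarrow> ('g,'b) monoid_scheme)
    \<Rightarrow> ('v \<times> 'g) list \<Rightarrow> ('v \<times> 'g) list \<Rightarrow> bool"
  for E G where
  swap: "E u v \<Longrightarrow> gp_step E G (p @ [(u,x),(v,y)] @ s) (p @ [(v,y),(u,x)] @ s)"
| merge: "gp_step E G (p @ [(v,x),(v,y)] @ s) (p @ [(v, x \<otimes>\<^bsub>G v\<^esub> y)] @ s)"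
| delete: "gp_step E G (p @ [(v, \<one>\<^bsub>G v\<^esub>)] @ s) (p @ s)"

definition gp_reduced :: "('v \<Rightarrow> 'v \<Rightarrow> bool) \<Rightarrow> ('v \<Rightarrow> ('g,'b) monoid_scheme)
    \<Rightarrow> ('v \<times> 'g) list \<Rightarrow> bool" where
  "gp_reduced E G w \<longleftrightarrow> \<not> (\<exists>w'. (gp_step E G)\<^sup>*\<^sup>* w w' \<and> length w' < length w)"

definition gp_eq :: "'v set \<Rightarrow> ('v \<Rightarrow> 'v \<Rightarrow> bool) \<Rightarrow> ('v \<Rightarrow> ('g,'b) monoid_scheme)
    \<Rightarrow> (('v \<times> 'g) list \<times> ('v \<times> 'g) list) set" where
  "gp_eq V E G = ({(w,w'). w \<in> gp_words V G \<and> w' \<in> gp_words V G \<and>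
       (gp_step E G w w' \<or> gp_step E G w' w)})\<^sup>* \<inter> (gp_words V G \<times> gp_words V G)"

definition gp_carrier :: "'v set \<Rightarrow> ('v \<Rightarrow> 'v \<Rightarrow> bool) \<Rightarrow> ('v \<Rightarrow> ('g,'b) monoid_scheme)
    \<Rightarrow> ('v \<times> 'g) list set set" where
  "gp_carrier V E G = gp_words V G // gp_eq V E G"

definition gp_mult :: "'v set \<Rightarrow> ('v \<Rightarrow> 'v \<Rightarrow> bool) \<Rightarrow> ('v \<Rightarrow> ('g,'b) monoid_scheme)
    \<Rightarrow> ('v \<times> 'g) list set \<Rightarrow> ('v \<times> 'g) list set \<Rightarrow> ('v \<times> 'g) list set" where
  "gp_mult V E G X Y = gp_eq V E G `` {x @ y | x y. x \<in> X \<and> y \<in> Y}"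

definition gp_one :: "'v set \<Rightarrow> ('v \<Rightarrow> 'v \<Rightarrow> bool) \<Rightarrow> ('v \<Rightarrow> ('g,'b) monoid_scheme)
    \<Rightarrow> ('v \<times> 'g) list set" where
  "gp_one V E G = gp_eq V E G `` {[]}"

definition gp_of :: "'v set \<Rightarrow> ('v \<Rightarrow> 'v \<Rightarrow> bool) \<Rightarrow> ('v \<Rightarrow> ('g,'b) monoid_scheme)
    \<Rightarrow> 'v \<Rightarrow> 'g \<Rightarrow> ('v \<times> 'g) list set" where
  "gp_of V E G v x = gp_eq V E G `` {[(v,x)]}"

definition gp_rlen :: "('v \<Rightarrow> 'v \<Rightarrow> bool) \<Rightarrow> ('v \<Rightarrow> ('g,'b) monoid_scheme)
    \<Rightarrow> ('v \<times> 'g) list set \<Rightarrow> nat" where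
  "gp_rlen E G g = length (SOME w. w \<in> g \<and> gp_reduced E G w)"

definition gp_A :: "'v set \<Rightarrow> ('v \<Rightarrow> 'v \<Rightarrow> bool) \<Rightarrow> ('v \<Rightarrow> ('g,'b) monoid_scheme)
    \<Rightarrow> 'v \<Rightarrow> ('v \<times> 'g) list set set" where
  "gp_A V E G v = {g \<in> gp_carrier V E G. \<exists>x \<in> carrier (G v).
      gp_rlen E G (gp_mult V E G (gp_of V E G v x) g) < gp_rlen E G g}"

text \<open>The collection of walls (each k A_v, distinct sets counted once).\<close>
definition gp_walls :: "'v set \<Rightarrow> ('v \<Rightarrow> 'v \<Rightarrow> bool) \<Rightarrow> ('v \<Rightarrow> ('g,'b) monoid_scheme)
    \<Rightarrow> ('v \<times> 'g) list set set set" where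
  "gp_walls V E G = {(gp_mult V E G k) ` gp_A V E G v | k v. k \<in> gp_carrier V E G \<and> v \<in> V}"

definition gp_separates :: "'a set \<Rightarrow> 'a \<Rightarrow> 'a \<Rightarrow> bool" where
  "gp_separates S x y \<longleftrightarrow> (x \<in> S \<and> y \<notin> S) \<or> (y \<in> S \<and> x \<notin> S)"

definition gp_wall_dist :: "'v set \<Rightarrow> ('v \<Rightarrow> 'v \<Rightarrow> bool) \<Rightarrow> ('v \<Rightarrow> ('g,'b) monoid_scheme)
    \<Rightarrow> ('v \<times> 'g) list set \<Rightarrow> ('v \<times> 'g) list set \<Rightarrow> nat" where
  "gp_wall_dist V E G x y = card {S \<in> gp_walls V E G. gp_separates S x y}"

end

theory Submission
  imports Defs "HOL-Library.Multiset"
begin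


locale gpx =
  fixes V :: "'v set" and E :: "'v \<Rightarrow> 'v \<Rightarrow> bool"
    and G :: "'v \<Rightarrow> ('g,'b) monoid_scheme"
  assumes EV: "\<And>u v. E u v \<Longrightarrow> u \<in> V \<and> v \<in> V"
    and Esym: "\<And>u v. E u v \<Longrightarrow> E v u"
    and Eirr: "\<And>v. \<not> E v v"
    and grp: "\<And>v. v \<in> V \<Longrightarrow> group (G v)"
begin

fun vsplit :: "'v \<Rightarrow> ('v \<times> 'g) list \<Rightarrow> (('v \<times> 'g) list \<times> 'g \<times> ('v \<times> 'g) list) option" where
  "vsplit v [] = None"
| "vsplit v ((u,z)#w) = (if u = v then Some ([], z, w) else if E u v then
      map_option (\<lambda>(p,y,q). ((u,z)#p, y, q)) (vsplit v w) else None)"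

definition act :: "'v \<Rightarrow> 'g \<Rightarrow> ('v \<times> 'g) list \<Rightarrow> ('v \<times> 'g) list" where
  "act v x w = (case vsplit v w of
      Some (p,y,q) \<Rightarrow> (if x \<otimes>\<^bsub>G v\<^esub> y = \<one>\<^bsub>G v\<^esub> then p @ q else p @ (v, x \<otimes>\<^bsub>G v\<^esub> y) # q)
    | None \<Rightarrow> (if x = \<one>\<^bsub>G v\<^esub> then w else (v,x) # w))"

fun SRw :: "('v \<times> 'g) list \<Rightarrow> bool" where
  "SRw [] = True"
| "SRw ((v,x)#w) = (x \<noteq> \<one>\<^bsub>G v\<^esub> \<and> vsplit v w = None \<and> SRw w)"

definition adj :: "'v \<Rightarrow> ('v \<times> 'g) list \<Rightarrow> bool" where
  "adj v p \<longleftrightarrow> (\<forall>c\<in>set p. E (fst c) v)"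

lemma adj_simps[simp]: "adj v [] = True" "adj v (c#p) = (E (fst c) v \<and> adj v p)"
  "adj v (p@q) = (adj v p \<and> adj v q)"
  by (auto simp: adj_def)

lemma vsplit_Some: "vsplit v w = Some (p,y,q) \<Longrightarrow> w = p @ (v,y) # q \<and> adj v p"
  by (induction v w arbitrary: p rule: vsplit.induct) (auto split: if_splits)

lemma vsplit_decomp: "adj v p \<Longrightarrow> vsplit v (p @ (v,y) # q) = Some (p,y,q)"
  by (induction p) (auto simp: Eirr)

lemma vsplit_None: "vsplit v w = None \<longleftrightarrow> \<not> (\<exists>p y q. w = p @ (v,y) # q \<and> adj v p)"
  by (metis option.exhaust prod_cases3 vsplit_Some vsplit_decomp option.distinct(1))

lemma vsplit_cons_None: "vsplit v ((u,z)#b) = None \<longleftrightarrow> (u \<noteq> v \<and> (\<not> E u v \<or> vsplit v b = None))"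
  by auto

lemma vsplit_cons_None': "vsplit v (c#b) = None \<longleftrightarrow> (fst c \<noteq> v \<and> (\<not> E (fst c) v \<or> vsplit v b = None))"
  by (cases c) auto

lemma vsplit_append: "(vsplit v (a @ b) = None) \<longleftrightarrow> (vsplit v a = None \<and> (\<not> adj v a \<or> vsplit v b = None))"
  by (induction a) (auto simp: vsplit_cons_None' simp del: vsplit.simps(2))

lemma adj_vsplit_None: "adj v p \<Longrightarrow> vsplit v p = None"
  by (induction p) (auto simp: Eirr)

lemma vsplit_map_fst: "map fst w = map fst w' \<Longrightarrow> (vsplit v w = None) = (vsplit v w' = None)"
  by (induction w arbitrary: w' ) (auto simp: Cons_eq_map_conv)

lemma vsplit_mem: "vsplit v w \<noteq> None \<Longrightarrow> \<exists>y. (v,y) \<in> set w"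
  using vsplit_Some by (metis option.exhaust prod_cases3 in_set_conv_decomp)


definition proj :: "'v \<Rightarrow> 'v \<Rightarrow> ('v \<times> 'g) list \<Rightarrow> ('v \<times> 'g) list" where
  "proj s t w = filter (\<lambda>c. fst c = s \<or> fst c = t) w"

definition peq :: "('v \<times> 'g) list \<Rightarrow> ('v \<times> 'g) list \<Rightarrow> bool" where
  "peq w w' \<longleftrightarrow> (\<forall>s t. \<not> E s t \<longrightarrow> proj s t w = proj s t w')"

lemma peq_refl[simp]: "peq w w" by (simp add: peq_def)
lemma peq_sym: "peq w w' \<Longrightarrow> peq w' w" by (simp add: peq_def)
lemma peq_trans: "peq a b \<Longrightarrow> peq b c \<Longrightarrow> peq a c" by (simp add: peq_def)

lemma proj_adj_nil: "adj v p \<Longrightarrow> \<not> E s t \<Longrightarrow> v = s \<or> v = t \<Longrightarrow> proj s t p = []"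
  unfolding proj_def adj_def using Eirr Esym by (auto simp: filter_empty_conv) 

lemma st_proj: "vsplit v w \<noteq> None \<longleftrightarrow> (\<forall>t. \<not> E t v \<longrightarrow> (\<exists>y l. proj t v w = (v,y)#l))"
proof
  assume "vsplit v w \<noteq> None"
  then obtain p y q where "vsplit v w = Some (p,y,q)" by auto
  from vsplit_Some[OF this] have w: "w = p @ (v,y) # q" and a: "adj v p" by auto
  show "\<forall>t. \<not> E t v \<longrightarrow> (\<exists>y l. proj t v w = (v,y)#l)"
  proof (intro allI impI)
    fix t assume "\<not> E t v"
    then have "proj t v p = []" using proj_adj_nil[OF a] by blast
    then show "\<exists>y l. proj t v w = (v,y)#l" by (auto simp: w proj_def)
  qed
next
  assume H: "\<forall>t. \<not> E t v \<longrightarrow> (\<exists>y l. proj t v w = (v,y)#l)"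
  then show "vsplit v w \<noteq> None"
  proof (induction w)
    case Nil
    then show ?case using Eirr[of v] by (auto simp: proj_def)
  next
    case (Cons c w)
    obtain u z where c: "c = (u,z)" by (cases c)
    show ?case
    proof (cases "u = v")
      case True then show ?thesis by (simp add: c)
    next
      case False
      show ?thesis
      proof (cases "E u v")
        case True
        have "\<forall>t. \<not> E t v \<longrightarrow> (\<exists>y l. proj t v w = (v,y)#l)"
        proof (intro allI impI)
          fix t assume nt: "\<not> E t v"
          then have "u \<noteq> t" using True by auto
          with nt Cons.prems False show "\<exists>y l. proj t v w = (v,y)#l" by (auto simp: proj_def c)
        qed
        then have "vsplit v w \<noteq> None" using Cons.IH by blast
        then show ?thesis using True False by (auto simp: c)
      next
        case False2: False
        from Cons.prems False2 obtain y l where "proj u v (c#w) = (v,y)#l" by blast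
        then show ?thesis using False by (auto simp: proj_def c)
      qed
    qed
  qed
qed

definition Gf :: "'v \<Rightarrow> 'g \<Rightarrow> bool \<Rightarrow> ('v \<times> 'g) list \<Rightarrow> ('v \<times> 'g) list" where
  "Gf v x b l = (if b then (case l of [] \<Rightarrow> [] | c#l' \<Rightarrow>
       (if x \<otimes>\<^bsub>G v\<^esub> snd c = \<one>\<^bsub>G v\<^esub> then l' else (v, x \<otimes>\<^bsub>G v\<^esub> snd c) # l'))
     else (if x = \<one>\<^bsub>G v\<^esub> then l else (v,x) # l))"

lemma proj_act: "\<not> E s t \<Longrightarrow> proj s t (act v x w) =
   (if v = s \<or> v = t then Gf v x (vsplit v w \<noteq> None) (proj s t w) else proj s t w)"
proof (cases "vsplit v w")
  case None
  then show "\<not> E s t \<Longrightarrow> ?thesis" by (auto simp: act_def Gf_def proj_def)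
next
  case (Some a)
  then obtain p y q where S: "vsplit v w = Some (p,y,q)" by (cases a) auto
  from vsplit_Some[OF S] have w: "w = p @ (v,y) # q" and a: "adj v p" by auto
  assume n: "\<not> E s t"
  show ?thesis
  proof (cases "v = s \<or> v = t")
    case True
    then have "proj s t p = []" using proj_adj_nil[OF a n] by blast
    then show ?thesis using True S by (auto simp: act_def Gf_def proj_def w)
  next
    case False
    then show ?thesis using S by (auto simp: act_def proj_def w)
  qed
qed

lemma act_respects: "peq w w' \<Longrightarrow> peq (act v x w) (act v x w')"
proof -
  assume P: "peq w w'"
  have "(vsplit v w \<noteq> None) = (vsplit v w' \<noteq> None)"
    using P unfolding st_proj peq_def by (metis Eirr Esym)
  then show ?thesis using P unfolding peq_def by (simp add: proj_act)
qed

lemma st_act_other: "E t v \<Longrightarrow> (vsplit v (act t c w) = None) = (vsplit v w = None)"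
proof (cases "vsplit t w")
  case None
  assume "E t v"
  then show ?thesis using None Eirr[of v] by (auto simp: act_def)
next
  case (Some a)
  assume E: "E t v"
  then obtain p y q where S: "vsplit t w = Some (p,y,q)" using Some by (cases a) auto
  from vsplit_Some[OF S] have w: "w = p @ (t,y) # q" by auto
  have tv: "t \<noteq> v" using E Eirr by auto
  show ?thesis using S E tv by (auto simp: act_def w vsplit_append)
qed

lemma act_comm: "E u v \<Longrightarrow> peq (act u x (act v y w)) (act v y (act u x w))"
  unfolding peq_def
proof (intro allI impI)
  fix s t assume E: "E u v" and n: "\<not> E s t"
  have uv: "u \<noteq> v" using E Eirr by auto
  have nb: "\<not> ((u = s \<or> u = t) \<and> (v = s \<or> v = t))"
    using E n Esym uv by auto
  have s1: "(vsplit u (act v y w) = None) = (vsplit u w = None)" using st_act_other Esym[OF E] by blast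
  have s2: "(vsplit v (act u x w) = None) = (vsplit v w = None)" using st_act_other E by blast
  show "proj s t (act u x (act v y w)) = proj s t (act v y (act u x w))"
    using nb s1 s2 n by (auto simp: proj_act)
qed


abbreviation "W \<equiv> gp_words V G"

lemma W_simps[simp]: "[] \<in> W" "(c#w \<in> W) = (fst c \<in> V \<and> snd c \<in> carrier (G (fst c)) \<and> w \<in> W)"
  "(a@b \<in> W) = (a \<in> W \<and> b \<in> W)"
  by (auto simp: gp_words_def)

lemma SRw_suffix: "SRw (p@q) \<Longrightarrow> SRw q"
  by (induction p) auto

lemma SRw_pattern: "SRw (p@(v,y)#q) \<Longrightarrow> y' \<noteq> \<one>\<^bsub>G v\<^esub> \<Longrightarrow> SRw (p@(v,y')#q)"
proof (induction p)
  case Nil then show ?case by simp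
next
  case (Cons c p)
  obtain u z where c: "c = (u,z)" by (cases c)
  have "map fst (p@(v,y)#q) = map fst (p@(v,y')#q)" by simp
  from vsplit_map_fst[OF this, of u] Cons show ?case by (auto simp: c)
qed

lemma SRw_del_left: "adj v p \<Longrightarrow> SRw (p@(v,y)#q) \<Longrightarrow> SRw (p@q)"
proof (induction p)
  case Nil then show ?case by simp
next
  case (Cons c p)
  obtain u z where c: "c = (u,z)" by (cases c)
  have E: "E u v" using Cons.prems by (simp add: c)
  then have "E v u" "v \<noteq> u" using Esym Eirr by auto
  then show ?case using Cons by (auto simp: c vsplit_append)
qed

lemma SRw_del_right: "adj v q \<Longrightarrow> SRw (p@(v,y)#q) \<Longrightarrow> SRw (p@q)"
proof (induction p)
  case Nil then show ?case by simp
next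
  case (Cons c p)
  obtain u z where c: "c = (u,z)" by (cases c)
  have "vsplit u q = None" if A: "adj u p" "vsplit u (p@(v,y)#q) = None"
  proof (rule ccontr)
    assume "vsplit u q \<noteq> None"
    then obtain y' where "(u,y') \<in> set q" using vsplit_mem by blast
    then have "E u v" using Cons.prems(1) by (auto simp: adj_def)
    then have "E v u" "v \<noteq> u" using Esym Eirr by auto
    then show False using A \<open>vsplit u q \<noteq> None\<close> by (auto simp: vsplit_append)
  qed
  then show ?case using Cons by (auto simp: c vsplit_append)
qed

lemma SRw_snoc: "SRw z \<Longrightarrow> x \<noteq> \<one>\<^bsub>G v\<^esub> \<Longrightarrow> \<not> (\<exists>p y q. z = p@(v,y)#q \<and> adj v q) \<Longrightarrow> SRw (z@[(v,x)])"
proof (induction z)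
  case Nil then show ?case by simp
next
  case (Cons c z)
  obtain u a where c: "c = (u,a)" by (cases c)
  have nz: "\<not> (\<exists>p y q. z = p@(v,y)#q \<and> adj v q)"
  proof
    assume "\<exists>p y q. z = p@(v,y)#q \<and> adj v q"
    then obtain p y q where "z = p@(v,y)#q" "adj v q" by blast
    then have "c#z = (c#p)@(v,y)#q \<and> adj v q" by simp
    then show False using Cons.prems(3) by blast
  qed
  have "\<not> (adj u z \<and> v = u)"
  proof
    assume "adj u z \<and> v = u"
    then have "c#z = []@(v,a)#z \<and> adj v z" by (simp add: c)
    then show False using Cons.prems(3) by blast
  qed
  then show ?case using Cons nz by (auto simp: c vsplit_append)
qed

lemma SRw_nonid: "SRw w \<Longrightarrow> (v,x) \<in> set w \<Longrightarrow> x \<noteq> \<one>\<^bsub>G v\<^esub>"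
  by (induction w rule: SRw.induct) auto

lemma act_W: "v \<in> V \<Longrightarrow> x \<in> carrier (G v) \<Longrightarrow> w \<in> W \<Longrightarrow> act v x w \<in> W"
proof -
  assume v: "v \<in> V" and x: "x \<in> carrier (G v)" and w: "w \<in> W"
  interpret Gv: group "G v" using grp[OF v] .
  show ?thesis
  proof (cases "vsplit v w")
    case None then show ?thesis using v x w by (auto simp: act_def)
  next
    case (Some a)
    then obtain p y q where S: "vsplit v w = Some (p,y,q)" by (cases a) auto
    from vsplit_Some[OF S] have ww: "w = p @ (v,y) # q" by auto
    then show ?thesis using S v x w by (auto simp: act_def)
  qed
qed

lemma act_SR: "v \<in> V \<Longrightarrow> SRw w \<Longrightarrow> SRw (act v x w)"
proof -
  assume v: "v \<in> V" and w: "SRw w"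
  show ?thesis
  proof (cases "vsplit v w")
    case None then show ?thesis using v w by (auto simp: act_def)
  next
    case (Some a)
    then obtain p y q where S: "vsplit v w = Some (p,y,q)" by (cases a) auto
    from vsplit_Some[OF S] have ww: "w = p @ (v,y) # q" and a: "adj v p" by auto
    have w': "SRw (p @ (v,y) # q)" using w ww by simp
    show ?thesis
    proof (cases "x \<otimes>\<^bsub>G v\<^esub> y = \<one>\<^bsub>G v\<^esub>")
      case True
      then have "act v x w = p @ q" using S by (simp add: act_def)
      then show ?thesis using SRw_del_left[OF a w'] by simp
    next
      case False
      then have "act v x w = p @ (v, x \<otimes>\<^bsub>G v\<^esub> y) # q" using S by (simp add: act_def)
      then show ?thesis using SRw_pattern[OF w' False] by simp
    qed
  qed
qed

lemma act_one: "v \<in> V \<Longrightarrow> w \<in> W \<Longrightarrow> SRw w \<Longrightarrow> act v \<one>\<^bsub>G v\<^esub> w = w"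
proof -
  assume v: "v \<in> V" and wW: "w \<in> W" and w: "SRw w"
  interpret Gv: group "G v" using grp[OF v] .
  show ?thesis
  proof (cases "vsplit v w")
    case None then show ?thesis by (auto simp: act_def)
  next
    case (Some a)
    then obtain p y q where S: "vsplit v w = Some (p,y,q)" by (cases a) auto
    from vsplit_Some[OF S] have ww: "w = p @ (v,y) # q" by auto
    have "y \<in> carrier (G v)" using wW ww by simp
    moreover have "y \<noteq> \<one>\<^bsub>G v\<^esub>" using SRw_nonid[OF w] ww by auto
    ultimately show ?thesis using S ww by (auto simp: act_def)
  qed
qed

lemma peq_move: "adj v p \<Longrightarrow> peq ((v,x)#p@q) (p@(v,x)#q)"
  unfolding peq_def
proof (intro allI impI)
  fix s t assume a: "adj v p" and n: "\<not> E s t"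
  show "proj s t ((v,x)#p@q) = proj s t (p@(v,x)#q)"
  proof (cases "v = s \<or> v = t")
    case True then have "proj s t p = []" using proj_adj_nil[OF a n] by blast
    then show ?thesis by (auto simp: proj_def)
  next
    case False then show ?thesis by (auto simp: proj_def)
  qed
qed

lemma act_merge: "v \<in> V \<Longrightarrow> x \<in> carrier (G v) \<Longrightarrow> y \<in> carrier (G v) \<Longrightarrow> w \<in> W \<Longrightarrow> SRw w
   \<Longrightarrow> peq (act v x (act v y w)) (act v (x \<otimes>\<^bsub>G v\<^esub> y) w)"
proof -
  assume v: "v \<in> V" and x: "x \<in> carrier (G v)" and y: "y \<in> carrier (G v)" and wW: "w \<in> W" and w: "SRw w"
  interpret Gv: group "G v" using grp[OF v] .
  show ?thesis
  proof (cases "vsplit v w")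
    case None
    show ?thesis
    proof (cases "y = \<one>\<^bsub>G v\<^esub>")
      case True then show ?thesis using None x by (simp add: act_def)
    next
      case False
      then have "act v y w = []@(v,y)#w" using None by (simp add: act_def)
      then have "vsplit v (act v y w) = Some ([],y,w)" using vsplit_decomp[of v "[]"] by simp
      then show ?thesis using None False by (simp add: act_def)
    qed
  next
    case (Some a)
    then obtain p z q where S: "vsplit v w = Some (p,z,q)" by (cases a) auto
    from vsplit_Some[OF S] have ww: "w = p @ (v,z) # q" and a: "adj v p" by auto
    have z: "z \<in> carrier (G v)" using wW ww by simp
    show ?thesis
    proof (cases "y \<otimes>\<^bsub>G v\<^esub> z = \<one>\<^bsub>G v\<^esub>")
      case True
      have A1: "act v y w = p @ q" using S True by (simp add: act_def)
      have "SRw ((v,z)#q)" using w ww SRw_suffix by blast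
      then have "vsplit v q = None" by simp
      moreover have "vsplit v p = None" using adj_vsplit_None[OF a] .
      ultimately have N: "vsplit v (p@q) = None" by (simp add: vsplit_append)
      have xyz: "x \<otimes>\<^bsub>G v\<^esub> y \<otimes>\<^bsub>G v\<^esub> z = x" using True x y z by (simp add: Gv.m_assoc)
      show ?thesis
      proof (cases "x = \<one>\<^bsub>G v\<^esub>")
        case True
        then show ?thesis using A1 N S xyz by (simp add: act_def)
      next
        case False
        then have "act v x (act v y w) = (v,x)#p@q" using A1 N by (simp add: act_def)
        moreover have "act v (x \<otimes>\<^bsub>G v\<^esub> y) w = p@(v,x)#q" using S xyz False by (simp add: act_def)
        ultimately show ?thesis using peq_move[OF a] by simp
      qed
    next
      case False
      have A1: "act v y w = p @ (v, y \<otimes>\<^bsub>G v\<^esub> z) # q" using S False by (simp add: act_def)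
      have S2: "vsplit v (act v y w) = Some (p, y \<otimes>\<^bsub>G v\<^esub> z, q)" using A1 vsplit_decomp[OF a] by simp
      have "x \<otimes>\<^bsub>G v\<^esub> (y \<otimes>\<^bsub>G v\<^esub> z) = x \<otimes>\<^bsub>G v\<^esub> y \<otimes>\<^bsub>G v\<^esub> z" using x y z by (simp add: Gv.m_assoc)
      then show ?thesis using S S2 by (simp add: act_def)
    qed
  qed
qed

end


context gpx begin
definition Ff :: "('v \<times> 'g) list \<Rightarrow> ('v \<times> 'g) list \<Rightarrow> ('v \<times> 'g) list" where
  "Ff a r = foldr (\<lambda>c r. act (fst c) (snd c) r) a r"

definition nf :: "('v \<times> 'g) list \<Rightarrow> ('v \<times> 'g) list" where
  "nf w = Ff w []"

lemma Ff_simps[simp]: "Ff [] r = r" "Ff (c#a) r = act (fst c) (snd c) (Ff a r)"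
  "Ff (a@b) r = Ff a (Ff b r)"
  by (auto simp: Ff_def)

lemma nf_simps[simp]: "nf [] = []" "nf (c#w) = act (fst c) (snd c) (nf w)"
  "nf (a@b) = Ff a (nf b)"
  by (auto simp: nf_def)

lemma Ff_W: "a \<in> W \<Longrightarrow> r \<in> W \<Longrightarrow> Ff a r \<in> W"
  by (induction a) (auto intro: act_W)

lemma Ff_SR: "a \<in> W \<Longrightarrow> SRw r \<Longrightarrow> SRw (Ff a r)"
  by (induction a) (auto intro: act_SR)

lemma nf_W: "w \<in> W \<Longrightarrow> nf w \<in> W"
  using Ff_W[of w "[]"] by (simp add: nf_def)

lemma nf_SR: "w \<in> W \<Longrightarrow> SRw (nf w)"
  using Ff_SR[of w "[]"] by (simp add: nf_def)

lemma nf_SR_id: "SRw w \<Longrightarrow> nf w = w"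
  by (induction w rule: SRw.induct) (auto simp: act_def)

lemma Ff_respects: "peq r r' \<Longrightarrow> peq (Ff a r) (Ff a r')"
  by (induction a) (auto intro: act_respects)

lemma peq_length: "peq a b \<Longrightarrow> length a = length (b :: ('v \<times> 'g) list)"
proof -
  assume P: "peq a b"
  have "count (mset a) c = count (mset b) c" for c :: "'v \<times> 'g"
  proof -
    have "proj (fst c) (fst c) a = proj (fst c) (fst c) b" using P Eirr unfolding peq_def by blast
    then have "count (mset (proj (fst c) (fst c) a)) c = count (mset (proj (fst c) (fst c) b)) c" by simp
    then show ?thesis by (simp add: proj_def mset_filter)
  qed
  then have "mset a = mset b" by (simp add: multiset_eq_iff)
  then show ?thesis by (metis size_mset)
qed

lemma step_W: assumes "w \<in> W" "gp_step E G w w'" shows "w' \<in> W"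
  using assms(2)
proof (cases rule: gp_step.cases)
  case (merge p v x y s)
  have "v \<in> V" using merge assms by auto
  interpret Gv: group "G v" using grp \<open>v \<in> V\<close> by auto
  show ?thesis using merge assms by auto
qed (use assms in auto)

lemma step_peq: assumes "w \<in> W" "gp_step E G w w'" shows "peq (nf w) (nf w')"
  using assms(2)
proof (cases rule: gp_step.cases)
  case (swap u v p x y s)
  then show ?thesis by (auto intro: Ff_respects act_comm)
next
  case (merge p v x y s)
  have "s \<in> W" using merge assms by auto
  then show ?thesis using merge assms by (auto intro!: Ff_respects act_merge nf_W nf_SR)
next
  case (delete p v s)
  have "s \<in> W" "v \<in> V" using delete assms by auto
  then show ?thesis using delete by (auto simp: act_one nf_W nf_SR)
qed

abbreviation "R \<equiv> {(w,w'). w \<in> W \<and> w' \<in> W \<and> (gp_step E G w w' \<or> gp_step E G w' w)}"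

lemma gp_eq_alt: "gp_eq V E G = R\<^sup>* \<inter> (W \<times> W)"
  by (simp add: gp_eq_def)

lemma gp_eq_peq: "(w,w') \<in> gp_eq V E G \<Longrightarrow> peq (nf w) (nf w')"
proof -
  assume "(w,w') \<in> gp_eq V E G"
  then have "(w,w') \<in> R\<^sup>*" by (simp add: gp_eq_alt)
  then show ?thesis
  proof (induction rule: rtrancl_induct)
    case base then show ?case by simp
  next
    case (step y z)
    then have "peq (nf y) (nf z)" using step_peq peq_sym by blast
    then show ?case using step.IH peq_trans by blast
  qed
qed

lemma gp_eq_equiv: "equiv W (gp_eq V E G)"
proof (rule equivI)
  show "refl_on W (gp_eq V E G)" by (auto simp: refl_on_def gp_eq_alt)
  have "sym R" by (auto simp: sym_def)
  then have "sym (R\<^sup>*)" by (rule sym_rtrancl)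
  then show "sym (gp_eq V E G)" unfolding gp_eq_alt by (auto simp: sym_def)
  show "trans (gp_eq V E G)" unfolding gp_eq_alt
    by (rule trans_Int) (auto simp: trans_def intro: rtrancl_trans)
qed (auto simp: gp_eq_alt)

lemma gp_eq_refl: "w \<in> W \<Longrightarrow> (w,w) \<in> gp_eq V E G"
  by (simp add: gp_eq_alt)
lemma gp_eq_sym: "(a,b) \<in> gp_eq V E G \<Longrightarrow> (b,a) \<in> gp_eq V E G"
  using gp_eq_equiv by (meson equivE symD)
lemma gp_eq_trans: "(a,b) \<in> gp_eq V E G \<Longrightarrow> (b,c) \<in> gp_eq V E G \<Longrightarrow> (a,c) \<in> gp_eq V E G"
  using gp_eq_equiv by (meson equivE transD)
lemma gp_eq_W: "(a,b) \<in> gp_eq V E G \<Longrightarrow> a \<in> W \<and> b \<in> W"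
  by (simp add: gp_eq_alt)

lemma steps_W: "(gp_step E G)\<^sup>*\<^sup>* w w' \<Longrightarrow> w \<in> W \<Longrightarrow> w' \<in> W"
  by (induction rule: rtranclp_induct) (auto intro: step_W)

lemma steps_eq: "(gp_step E G)\<^sup>*\<^sup>* w w' \<Longrightarrow> w \<in> W \<Longrightarrow> (w,w') \<in> gp_eq V E G"
proof (induction rule: rtranclp_induct)
  case base then show ?case by (simp add: gp_eq_refl)
next
  case (step y z)
  have "y \<in> W" using steps_W step by blast
  then have "z \<in> W" using step_W step by blast
  then have "(y,z) \<in> gp_eq V E G" using \<open>y \<in> W\<close> step by (auto simp: gp_eq_alt)
  then show ?case using step gp_eq_trans by blast
qed

lemma step_ctx: assumes "gp_step E G w w'" shows "gp_step E G (a@w@b) (a@w'@b)"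
  using assms
proof (cases rule: gp_step.cases)
  case (swap u v p x y s)
  then show ?thesis using gp_step.swap[of E u v G "a@p" x y "s@b"] by simp
next
  case (merge p v x y s)
  then show ?thesis using gp_step.merge[of E G "a@p" v x y "s@b"] by simp
next
  case (delete p v s)
  then show ?thesis using gp_step.delete[of E G "a@p" v "s@b"] by simp
qed

lemma steps_ctx: "(gp_step E G)\<^sup>*\<^sup>* w w' \<Longrightarrow> (gp_step E G)\<^sup>*\<^sup>* (a@w@b) (a@w'@b)"
  by (induction rule: rtranclp_induct) (auto intro: rtranclp.rtrancl_into_rtrancl step_ctx)

lemma gp_eq_ctx: "(w,w') \<in> gp_eq V E G \<Longrightarrow> a \<in> W \<Longrightarrow> b \<in> W \<Longrightarrow> (a@w@b, a@w'@b) \<in> gp_eq V E G"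
proof -
  assume H: "(w,w') \<in> gp_eq V E G" and a: "a \<in> W" and b: "b \<in> W"
  from H have "(w,w') \<in> R\<^sup>*" by (simp add: gp_eq_alt)
  then have "(a@w@b, a@w'@b) \<in> R\<^sup>*"
  proof (induction rule: rtrancl_induct)
    case base then show ?case by simp
  next
    case (step y z)
    then have "(a@y@b, a@z@b) \<in> R" using a b step_ctx by auto
    then show ?case by (rule rtrancl_into_rtrancl[OF step.IH])
  qed
  then show ?thesis using H a b by (auto simp: gp_eq_alt)
qed

lemma gp_eq_app: "(a,a') \<in> gp_eq V E G \<Longrightarrow> (b,b') \<in> gp_eq V E G \<Longrightarrow> (a@b, a'@b') \<in> gp_eq V E G"
proof -
  assume A: "(a,a') \<in> gp_eq V E G" and B: "(b,b') \<in> gp_eq V E G"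
  have "([]@a@b, []@a'@b) \<in> gp_eq V E G" using gp_eq_ctx[OF A, of "[]" b] gp_eq_W[OF B] by simp
  moreover have "(a'@b@[], a'@b'@[]) \<in> gp_eq V E G" using gp_eq_ctx[OF B, of a' "[]"] gp_eq_W[OF A] by simp
  ultimately show ?thesis using gp_eq_trans by simp
qed

lemma move_left_steps: "adj v p \<Longrightarrow> (gp_step E G)\<^sup>*\<^sup>* (a@(v,x)#p@b) (a@p@(v,x)#b)"
proof (induction p arbitrary: a)
  case Nil then show ?case by simp
next
  case (Cons c p)
  obtain u z where c: "c = (u,z)" by (cases c)
  have "E v u" using Cons.prems Esym by (simp add: c)
  then have s1: "gp_step E G (a@[(v,x),(u,z)]@(p@b)) (a@[(u,z),(v,x)]@(p@b))" by (rule gp_step.swap)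
  have s2: "(gp_step E G)\<^sup>*\<^sup>* ((a@[c])@(v,x)#p@b) ((a@[c])@p@(v,x)#b)" using Cons.IH[of "a@[c]"] Cons.prems by simp
  have "(gp_step E G)\<^sup>*\<^sup>* (a@[(v,x),(u,z)]@(p@b)) ((a@[c])@p@(v,x)#b)"
    using converse_rtranclp_into_rtranclp[of "gp_step E G", OF s1] s2 c by simp
  then show ?case by (simp add: c)
qed

lemma move_right_steps: "adj v q \<Longrightarrow> (gp_step E G)\<^sup>*\<^sup>* (a@q@(v,x)#b) (a@(v,x)#q@b)"
proof (induction q arbitrary: a)
  case Nil then show ?case by simp
next
  case (Cons c q)
  obtain u z where c: "c = (u,z)" by (cases c)
  have "E u v" using Cons.prems by (simp add: c)
  then have s1: "gp_step E G (a@[(u,z),(v,x)]@(q@b)) (a@[(v,x),(u,z)]@(q@b))" by (rule gp_step.swap)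
  have s2: "(gp_step E G)\<^sup>*\<^sup>* ((a@[c])@q@(v,x)#b) ((a@[c])@(v,x)#q@b)" using Cons.IH[of "a@[c]"] Cons.prems by simp
  have "(gp_step E G)\<^sup>*\<^sup>* ((a@[c])@q@(v,x)#b) (a@[(v,x),(u,z)]@(q@b))"
    using rtranclp.rtrancl_into_rtrancl[of "gp_step E G", OF _ s1] s2 c by simp
  then show ?case by (simp add: c)
qed

lemma act_steps: "(gp_step E G)\<^sup>*\<^sup>* ((v,x)#r) (act v x r)"
proof (cases "vsplit v r")
  case None
  show ?thesis
  proof (cases "x = \<one>\<^bsub>G v\<^esub>")
    case True
    have "gp_step E G ([]@[(v,x)]@r) ([]@r)" unfolding True by (rule gp_step.delete)
    then show ?thesis using None True by (simp add: act_def)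
  next
    case False then show ?thesis using None by (simp add: act_def)
  qed
next
  case (Some a)
  then obtain p y q where S: "vsplit v r = Some (p,y,q)" by (cases a) auto
  from vsplit_Some[OF S] have rr: "r = p @ (v,y) # q" and a: "adj v p" by auto
  have 1: "(gp_step E G)\<^sup>*\<^sup>* ((v,x)#r) (p@[(v,x),(v,y)]@q)"
    using move_left_steps[OF a, of "[]" x "(v,y)#q"] rr by simp
  have 2: "gp_step E G (p@[(v,x),(v,y)]@q) (p@[(v, x \<otimes>\<^bsub>G v\<^esub> y)]@q)" by (rule gp_step.merge)
  show ?thesis
  proof (cases "x \<otimes>\<^bsub>G v\<^esub> y = \<one>\<^bsub>G v\<^esub>")
    case True
    have 3: "gp_step E G (p@[(v, x \<otimes>\<^bsub>G v\<^esub> y)]@q) (p@q)" unfolding True by (rule gp_step.delete)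
    show ?thesis using 1 2 3 S True by (simp add: act_def)
  next
    case False
    show ?thesis using 1 2 S False by (simp add: act_def)
  qed
qed

lemma act_eq: "v \<in> V \<Longrightarrow> x \<in> carrier (G v) \<Longrightarrow> r \<in> W \<Longrightarrow> ((v,x)#r, act v x r) \<in> gp_eq V E G"
  by (rule steps_eq[OF act_steps]) simp

lemma nf_eq: "w \<in> W \<Longrightarrow> (w, nf w) \<in> gp_eq V E G"
proof (induction w)
  case Nil then show ?case by (simp add: gp_eq_refl)
next
  case (Cons c w)
  obtain v x where c: "c = (v,x)" by (cases c)
  have v: "v \<in> V" and x: "x \<in> carrier (G v)" and w: "w \<in> W" using Cons.prems by (auto simp: c)
  have "([(v,x)]@w, [(v,x)]@nf w) \<in> gp_eq V E G"
    using gp_eq_app[OF gp_eq_refl[of "[(v,x)]"] Cons.IH[OF w]] v x by simp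
  moreover have "((v,x)#nf w, act v x (nf w)) \<in> gp_eq V E G" using act_eq v x nf_W w by blast
  ultimately show ?case using gp_eq_trans by (simp add: c)
qed

lemma not_SR_shorten: "\<not> SRw w \<Longrightarrow> \<exists>w'. (gp_step E G)\<^sup>*\<^sup>* w w' \<and> length w' < length w"
proof (induction w)
  case Nil then show ?case by simp
next
  case (Cons c w)
  obtain v x where c: "c = (v,x)" by (cases c)
  consider "x = \<one>\<^bsub>G v\<^esub>" | "vsplit v w \<noteq> None" | "\<not> SRw w" using Cons.prems by (auto simp: c)
  then show ?case
  proof cases
    case 1
    have "gp_step E G ([]@[(v,x)]@w) ([]@w)" unfolding 1 by (rule gp_step.delete)
    then show ?thesis by (auto simp: c)
  next
    case 2
    then obtain p y q where S: "vsplit v w = Some (p,y,q)" by auto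
    from vsplit_Some[OF S] have rr: "w = p @ (v,y) # q" and a: "adj v p" by auto
    have 1: "(gp_step E G)\<^sup>*\<^sup>* ((v,x)#w) (p@[(v,x),(v,y)]@q)"
      using move_left_steps[OF a, of "[]" x "(v,y)#q"] rr by simp
    have 2: "gp_step E G (p@[(v,x),(v,y)]@q) (p@[(v, x \<otimes>\<^bsub>G v\<^esub> y)]@q)" by (rule gp_step.merge)
    show ?thesis using 1 2 rr by (intro exI[of _ "p@[(v, x \<otimes>\<^bsub>G v\<^esub> y)]@q"]) (auto simp: c)
  next
    case 3
    then obtain w' where "(gp_step E G)\<^sup>*\<^sup>* w w'" "length w' < length w" using Cons.IH by blast
    then show ?thesis using steps_ctx[of w w' "[c]" "[]"] by (intro exI[of _ "c#w'"]) auto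
  qed
qed

lemma reduced_SR: "gp_reduced E G w \<Longrightarrow> SRw w"
  using not_SR_shorten unfolding gp_reduced_def by blast

end


context gpx begin

definition cls :: "('v \<times> 'g) list \<Rightarrow> ('v \<times> 'g) list set" where
  "cls w = gp_eq V E G `` {w}"

lemma carrier_eq: "gp_carrier V E G = cls ` W"
  by (auto simp: gp_carrier_def quotient_def cls_def)

lemma cls_in: "w \<in> W \<Longrightarrow> cls w \<in> gp_carrier V E G"
  by (simp add: carrier_eq)

lemma cls_eq_iff: "a \<in> W \<Longrightarrow> b \<in> W \<Longrightarrow> cls a = cls b \<longleftrightarrow> (a,b) \<in> gp_eq V E G"
  unfolding cls_def using equiv_class_eq_iff[OF gp_eq_equiv] by auto

lemma mem_cls: "w' \<in> cls w \<longleftrightarrow> (w,w') \<in> gp_eq V E G"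
  by (simp add: cls_def)

lemma cls_eqI: "(a,b) \<in> gp_eq V E G \<Longrightarrow> cls a = cls b"
  using cls_eq_iff gp_eq_W by blast

lemma mult_cls: "a \<in> W \<Longrightarrow> b \<in> W \<Longrightarrow> gp_mult V E G (cls a) (cls b) = cls (a@b)"
proof -
  assume a: "a \<in> W" and b: "b \<in> W"
  show ?thesis
  proof
    show "gp_mult V E G (cls a) (cls b) \<subseteq> cls (a @ b)"
    proof
      fix z assume "z \<in> gp_mult V E G (cls a) (cls b)"
      then obtain x y where xy: "(a,x) \<in> gp_eq V E G" "(b,y) \<in> gp_eq V E G" "(x@y, z) \<in> gp_eq V E G"
        by (auto simp: gp_mult_def mem_cls)
      then have "(a@b, x@y) \<in> gp_eq V E G" using gp_eq_app by blast
      then show "z \<in> cls (a@b)" using xy(3) gp_eq_trans by (auto simp: mem_cls)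
    qed
  next
    show "cls (a @ b) \<subseteq> gp_mult V E G (cls a) (cls b)"
    proof
      fix z assume "z \<in> cls (a@b)"
      moreover have "a \<in> cls a" "b \<in> cls b" using a b gp_eq_refl by (auto simp: mem_cls)
      ultimately show "z \<in> gp_mult V E G (cls a) (cls b)"
        unfolding gp_mult_def by (auto simp: mem_cls)
    qed
  qed
qed

lemma one_cls: "gp_one V E G = cls []" by (simp add: gp_one_def cls_def)
lemma of_cls: "gp_of V E G v x = cls [(v,x)]" by (simp add: gp_of_def cls_def)

definition winv :: "('v \<times> 'g) list \<Rightarrow> ('v \<times> 'g) list" where
  "winv w = rev (map (\<lambda>c. (fst c, inv\<^bsub>G (fst c)\<^esub> snd c)) w)"

lemma winv_simps[simp]: "winv [] = []" "winv (c#w) = winv w @ [(fst c, inv\<^bsub>G (fst c)\<^esub> snd c)]"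
  by (auto simp: winv_def)

lemma winv_W: "w \<in> W \<Longrightarrow> winv w \<in> W"
proof (induction w)
  case (Cons c w)
  interpret Gv: group "G (fst c)" using grp Cons.prems by auto
  show ?case using Cons by auto
qed simp

lemma winv_adj: "adj v w \<Longrightarrow> adj v (winv w)"
  by (induction w) auto

lemma winv_eq: "w \<in> W \<Longrightarrow> (winv w @ w, []) \<in> gp_eq V E G"
proof (induction w)
  case Nil then show ?case by (simp add: gp_eq_refl)
next
  case (Cons c w)
  obtain v x where c: "c = (v,x)" by (cases c)
  have v: "v \<in> V" and x: "x \<in> carrier (G v)" and w: "w \<in> W" using Cons.prems by (auto simp: c)
  interpret Gv: group "G v" using grp v by auto
  have s1: "gp_step E G (winv w @ [(v, inv\<^bsub>G v\<^esub> x), (v,x)] @ w) (winv w @ [(v, inv\<^bsub>G v\<^esub> x \<otimes>\<^bsub>G v\<^esub> x)] @ w)"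
    by (rule gp_step.merge)
  have s2: "gp_step E G (winv w @ [(v, \<one>\<^bsub>G v\<^esub>)] @ w) (winv w @ w)"
    by (rule gp_step.delete)
  have "(gp_step E G)\<^sup>*\<^sup>* (winv w @ [(v, inv\<^bsub>G v\<^esub> x), (v,x)] @ w) (winv w @ w)"
    using s1 s2 x by auto
  then have "(winv w @ [(v, inv\<^bsub>G v\<^esub> x), (v,x)] @ w, winv w @ w) \<in> gp_eq V E G"
    by (rule steps_eq) (use winv_W w v x in auto)
  then show ?case using Cons.IH[OF w] gp_eq_trans by (simp add: c)
qed

definition GP :: "('v \<times> 'g) list set monoid" where
  "GP = \<lparr>carrier = gp_carrier V E G, monoid.mult = gp_mult V E G, one = gp_one V E G\<rparr>"

lemma GP_simps[simp]: "carrier GP = gp_carrier V E G" "monoid.mult GP = gp_mult V E G" "one GP = gp_one V E G"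
  by (auto simp: GP_def)

lemma carrier_cases: "g \<in> gp_carrier V E G \<Longrightarrow> (\<And>w. w \<in> W \<Longrightarrow> g = cls w \<Longrightarrow> P) \<Longrightarrow> P"
  by (auto simp: carrier_eq)

lemma GP_group: "group GP"
proof (rule groupI)
  fix x y assume "x \<in> carrier GP" "y \<in> carrier GP"
  then show "x \<otimes>\<^bsub>GP\<^esub> y \<in> carrier GP"
    by (auto simp: carrier_eq mult_cls)
next
  show "\<one>\<^bsub>GP\<^esub> \<in> carrier GP" by (simp add: one_cls cls_in)
next
  fix x y z assume "x \<in> carrier GP" "y \<in> carrier GP" "z \<in> carrier GP"
  then show "x \<otimes>\<^bsub>GP\<^esub> y \<otimes>\<^bsub>GP\<^esub> z = x \<otimes>\<^bsub>GP\<^esub> (y \<otimes>\<^bsub>GP\<^esub> z)"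
    by (auto simp: carrier_eq mult_cls)
next
  fix x assume "x \<in> carrier GP"
  then show "\<one>\<^bsub>GP\<^esub> \<otimes>\<^bsub>GP\<^esub> x = x"
    by (auto simp: carrier_eq mult_cls one_cls)
next
  fix x assume "x \<in> carrier GP"
  then obtain w where w: "w \<in> W" "x = cls w" by (auto simp: carrier_eq)
  have "cls (winv w) \<otimes>\<^bsub>GP\<^esub> x = \<one>\<^bsub>GP\<^esub>"
    using w winv_W winv_eq by (simp add: mult_cls one_cls cls_eqI)
  moreover have "cls (winv w) \<in> carrier GP" using winv_W w by (simp add: cls_in)
  ultimately show "\<exists>y\<in>carrier GP. y \<otimes>\<^bsub>GP\<^esub> x = \<one>\<^bsub>GP\<^esub>" by blast
qed

lemma inv_cls: "w \<in> W \<Longrightarrow> inv\<^bsub>GP\<^esub> (cls w) = cls (winv w)"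
proof -
  assume w: "w \<in> W"
  interpret GPg: group GP by (rule GP_group)
  show ?thesis
    by (rule GPg.inv_equality) (use w winv_W winv_eq in \<open>auto simp: mult_cls one_cls cls_eqI cls_in\<close>)
qed

lemma cls_nf: "w \<in> W \<Longrightarrow> cls (nf w) = cls w"
  using nf_eq cls_eqI by (metis gp_eq_sym)

lemma rlen_cls: "w \<in> W \<Longrightarrow> gp_rlen E G (cls w) = length (nf w)"
proof -
  assume w: "w \<in> W"
  obtain w1 where w1: "(gp_step E G)\<^sup>*\<^sup>* w w1" "\<forall>y. (gp_step E G)\<^sup>*\<^sup>* w y \<longrightarrow> length w1 \<le> length y"
    using ex_has_least_nat[of "\<lambda>y. (gp_step E G)\<^sup>*\<^sup>* w y" w length] by auto
  have "gp_reduced E G w1"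
    unfolding gp_reduced_def using w1 by (meson leD rtranclp_trans)
  moreover have "w1 \<in> cls w" using steps_eq[OF w1(1) w] by (simp add: mem_cls)
  ultimately have ex: "\<exists>w'. w' \<in> cls w \<and> gp_reduced E G w'" by blast
  define w2 where "w2 = (SOME w'. w' \<in> cls w \<and> gp_reduced E G w')"
  have w2: "w2 \<in> cls w" "gp_reduced E G w2" using someI_ex[OF ex] by (auto simp: w2_def)
  have "SRw w2" using reduced_SR w2(2) by blast
  have "peq (nf w) (nf w2)" using gp_eq_peq w2(1) by (simp add: mem_cls)
  then have "length (nf w) = length w2" using nf_SR_id[OF \<open>SRw w2\<close>] peq_length by simp
  then show ?thesis by (simp add: gp_rlen_def w2_def)
qed

lemma A_iff: "v \<in> V \<Longrightarrow> w \<in> W \<Longrightarrow> cls w \<in> gp_A V E G v \<longleftrightarrow> vsplit v (nf w) \<noteq> None"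
proof -
  assume v: "v \<in> V" and w: "w \<in> W"
  interpret Gv: group "G v" using grp v by auto
  define r where "r = nf w"
  have rW: "r \<in> W" and rS: "SRw r" using nf_W nf_SR w by (auto simp: r_def)
  have L: "gp_rlen E G (gp_mult V E G (gp_of V E G v x) (cls w)) = length (act v x r)"
    if x: "x \<in> carrier (G v)" for x
    using x v w by (simp add: of_cls mult_cls rlen_cls r_def)
  have "(\<exists>x\<in>carrier (G v). length (act v x r) < length r) \<longleftrightarrow> vsplit v r \<noteq> None"
  proof
    assume "\<exists>x\<in>carrier (G v). length (act v x r) < length r"
    then obtain x where "length (act v x r) < length r" by blast
    then show "vsplit v r \<noteq> None" by (cases "vsplit v r") (auto simp: act_def split: if_splits)
  next
    assume "vsplit v r \<noteq> None"
    then obtain p y q where S: "vsplit v r = Some (p,y,q)" by auto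
    from vsplit_Some[OF S] have rr: "r = p @ (v,y) # q" by auto
    have y: "y \<in> carrier (G v)" using rW rr by simp
    have "act v (inv\<^bsub>G v\<^esub> y) r = p @ q" using S y by (simp add: act_def)
    then show "\<exists>x\<in>carrier (G v). length (act v x r) < length r" using y rr
      by (intro bexI[of _ "inv\<^bsub>G v\<^esub> y"]) auto
  qed
  then show ?thesis using L w unfolding gp_A_def by (auto simp: cls_in rlen_cls r_def)
qed

end


context gpx begin

abbreviation "C \<equiv> gp_carrier V E G"
abbreviation "mm \<equiv> gp_mult V E G"
abbreviation "e \<equiv> gp_one V E G"
abbreviation "ginv \<equiv> m_inv GP"

definition Wd :: "('v \<times> 'g) list set \<Rightarrow> ('v \<times> 'g) list set \<Rightarrow> ('v \<times> 'g) list set set set" where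
  "Wd a b = {S \<in> gp_walls V E G. gp_separates S a b}"


lemma G_closed[simp]: "a \<in> C \<Longrightarrow> b \<in> C \<Longrightarrow> mm a b \<in> C"
  using monoid.m_closed[OF group.is_monoid[OF GP_group], of a b] by simp
lemma G_inv_closed[simp]: "a \<in> C \<Longrightarrow> ginv a \<in> C"
  using group.inv_closed[OF GP_group, of a] by simp
lemma G_e[simp]: "e \<in> C"
  using monoid.one_closed[OF group.is_monoid[OF GP_group]] by simp
lemma G_assoc: "a \<in> C \<Longrightarrow> b \<in> C \<Longrightarrow> c \<in> C \<Longrightarrow> mm (mm a b) c = mm a (mm b c)"
  using monoid.m_assoc[OF group.is_monoid[OF GP_group], of a b c] by simp
lemma G_linv[simp]: "a \<in> C \<Longrightarrow> mm (ginv a) a = e"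
  using group.l_inv[OF GP_group, of a] by simp
lemma G_rinv[simp]: "a \<in> C \<Longrightarrow> mm a (ginv a) = e"
  using group.r_inv[OF GP_group, of a] by simp
lemma G_lone[simp]: "a \<in> C \<Longrightarrow> mm e a = a"
  using monoid.l_one[OF group.is_monoid[OF GP_group], of a] by simp
lemma G_rone[simp]: "a \<in> C \<Longrightarrow> mm a e = a"
  using monoid.r_one[OF group.is_monoid[OF GP_group], of a] by simp
lemma G_invinv[simp]: "a \<in> C \<Longrightarrow> ginv (ginv a) = a"
  using group.inv_inv[OF GP_group, of a] by simp
lemma G_inv_mult: "a \<in> C \<Longrightarrow> b \<in> C \<Longrightarrow> ginv (mm a b) = mm (ginv b) (ginv a)"
  using group.inv_mult_group[OF GP_group, of a b] by simp
lemma G_inv_cancel: "a \<in> C \<Longrightarrow> b \<in> C \<Longrightarrow> mm (ginv a) (mm a b) = b"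
  by (simp add: G_assoc[symmetric])
lemma G_cancel2: "a \<in> C \<Longrightarrow> b \<in> C \<Longrightarrow> mm a (mm (ginv a) b) = b"
  by (simp add: G_assoc[symmetric])
lemma G_lcancel: "a \<in> C \<Longrightarrow> b \<in> C \<Longrightarrow> c \<in> C \<Longrightarrow> mm a b = mm a c \<longleftrightarrow> b = c"
  by (metis G_inv_cancel)

lemma A_sub: "gp_A V E G v \<subseteq> C"
  by (auto simp: gp_A_def)

lemma walls_sub: "S \<in> gp_walls V E G \<Longrightarrow> S \<subseteq> C"
proof -
  assume "S \<in> gp_walls V E G"
  then obtain k v where S: "S = mm k ` gp_A V E G v" "k \<in> C" by (auto simp: gp_walls_def)
  show ?thesis
  proof
    fix a assume "a \<in> S"
    then obtain b where "b \<in> gp_A V E G v" "a = mm k b" using S by auto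
    then show "a \<in> C" using A_sub S(2) G_closed by blast
  qed
qed

lemma mem_trans: "k \<in> C \<Longrightarrow> a \<in> C \<Longrightarrow> S \<subseteq> C \<Longrightarrow> a \<in> mm k ` S \<longleftrightarrow> mm (ginv k) a \<in> S"
proof -
  assume k: "k \<in> C" and a: "a \<in> C" and S: "S \<subseteq> C"
  show ?thesis
  proof
    assume "a \<in> mm k ` S"
    then obtain b where "b \<in> S" "a = mm k b" by auto
    then show "mm (ginv k) a \<in> S" using k S G_inv_cancel by auto
  next
    assume "mm (ginv k) a \<in> S"
    moreover have "mm k (mm (ginv k) a) = a" using k a G_cancel2 by auto
    ultimately show "a \<in> mm k ` S" by (metis image_eqI)
  qed
qed

lemma img_comp: "h \<in> C \<Longrightarrow> k \<in> C \<Longrightarrow> S \<subseteq> C \<Longrightarrow> mm h ` (mm k ` S) = mm (mm h k) ` S"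
proof -
  assume h: "h \<in> C" and k: "k \<in> C" and S: "S \<subseteq> C"
  have "mm h (mm k b) = mm (mm h k) b" if "b \<in> S" for b
    using G_assoc[of h k b] h k S that by auto
  then show ?thesis by (auto simp: image_image intro!: image_cong)
qed

lemma wall_trans: "h \<in> C \<Longrightarrow> S \<in> gp_walls V E G \<Longrightarrow> mm h ` S \<in> gp_walls V E G"
proof -
  interpret GPg: group GP by (rule GP_group)
  assume h: "h \<in> C" and "S \<in> gp_walls V E G"
  then obtain k v where S: "S = mm k ` gp_A V E G v" "k \<in> C" "v \<in> V" by (auto simp: gp_walls_def)
  have "mm h ` S = mm (mm h k) ` gp_A V E G v" using img_comp[OF h S(2) A_sub] S by simp
  moreover have "mm h k \<in> C" using h S GPg.m_closed by auto
  ultimately show ?thesis using S unfolding gp_walls_def by blast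
qed

lemma mem_img: "h \<in> C \<Longrightarrow> a \<in> C \<Longrightarrow> S \<subseteq> C \<Longrightarrow> mm h a \<in> mm h ` S \<longleftrightarrow> a \<in> S"
proof -
  interpret GPg: group GP by (rule GP_group)
  assume h: "h \<in> C" and a: "a \<in> C" and S: "S \<subseteq> C"
  show ?thesis
  proof
    assume "mm h a \<in> mm h ` S"
    then obtain b where "b \<in> S" "mm h a = mm h b" by auto
    then have "a = b" using G_lcancel[of h a b] h a S by auto
    then show "a \<in> S" using \<open>b \<in> S\<close> by simp
  qed auto
qed

lemma sep_trans: "h \<in> C \<Longrightarrow> a \<in> C \<Longrightarrow> b \<in> C \<Longrightarrow> S \<subseteq> C \<Longrightarrow>
   gp_separates (mm h ` S) (mm h a) (mm h b) \<longleftrightarrow> gp_separates S a b"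
  by (simp add: gp_separates_def mem_img)

lemma img_inv: "h \<in> C \<Longrightarrow> S \<subseteq> C \<Longrightarrow> mm (ginv h) ` (mm h ` S) = S"
proof -
  assume h: "h \<in> C" and S: "S \<subseteq> C"
  have "mm (ginv h) ` (mm h ` S) = mm (mm (ginv h) h) ` S" using img_comp[of "ginv h" h S] h S by simp
  also have "\<dots> = S" using h S by (auto simp: image_def subset_iff)
  finally show ?thesis .
qed

lemma Wd_trans: "h \<in> C \<Longrightarrow> a \<in> C \<Longrightarrow> b \<in> C \<Longrightarrow> Wd (mm h a) (mm h b) = (\<lambda>S. mm h ` S) ` Wd a b"
proof -
  interpret GPg: group GP by (rule GP_group)
  assume h: "h \<in> C" and a: "a \<in> C" and b: "b \<in> C"
  show ?thesis
  proof
    show "Wd (mm h a) (mm h b) \<subseteq> (\<lambda>S. mm h ` S) ` Wd a b"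
    proof
      fix S assume S: "S \<in> Wd (mm h a) (mm h b)"
      then have SW: "S \<in> gp_walls V E G" and sep: "gp_separates S (mm h a) (mm h b)" by (auto simp: Wd_def)
      have hi: "ginv h \<in> C" using h by simp
      define T where "T = mm (ginv h) ` S"
      have TW: "T \<in> gp_walls V E G" using wall_trans[OF hi SW] by (simp add: T_def)
      have ST: "S = mm h ` T" using img_inv[of "ginv h" S] hi walls_sub[OF SW] h by (simp add: T_def)
      have "gp_separates T a b" using sep sep_trans[OF h a b walls_sub[OF TW]] ST by simp
      then show "S \<in> (\<lambda>S. mm h ` S) ` Wd a b" using TW ST by (auto simp: Wd_def)
    qed
  next
    show "(\<lambda>S. mm h ` S) ` Wd a b \<subseteq> Wd (mm h a) (mm h b)"
      using wall_trans[OF h] sep_trans[OF h a b] walls_sub by (auto simp: Wd_def)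
  qed
qed

lemma inj_img: "h \<in> C \<Longrightarrow> inj_on (\<lambda>S. mm h ` S) (Wd a b)"
proof (rule inj_onI)
  fix S T assume h: "h \<in> C" and S: "S \<in> Wd a b" and T: "T \<in> Wd a b" and eq: "mm h ` S = mm h ` T"
  have "S = mm (ginv h) ` (mm h ` S)" using img_inv[OF h] walls_sub S by (simp add: Wd_def)
  also have "\<dots> = mm (ginv h) ` (mm h ` T)" using eq by simp
  also have "\<dots> = T" using img_inv[OF h] walls_sub T by (simp add: Wd_def)
  finally show "S = T" .
qed

lemma Wd_split: "Wd a c = (Wd a b - Wd b c) \<union> (Wd b c - Wd a b)"
  by (auto simp: Wd_def gp_separates_def)

lemma Wd_self: "Wd a a = {}"
  by (auto simp: Wd_def gp_separates_def)

lemma e_notin: "v \<in> V \<Longrightarrow> e \<notin> gp_A V E G v"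
  using A_iff[of v "[]"] by (simp add: one_cls)

lemma s_in: "v \<in> V \<Longrightarrow> x \<in> carrier (G v) \<Longrightarrow> x \<noteq> \<one>\<^bsub>G v\<^esub> \<Longrightarrow> cls [(v,x)] \<in> gp_A V E G v"
  using A_iff[of v "[(v,x)]"] by (simp add: act_def)

lemma Ff_st: "adj v z \<Longrightarrow> (vsplit v (Ff z r) = None) = (vsplit v r = None)"
  by (induction z) (auto simp: st_act_other)

lemma link_sub: "v \<in> V \<Longrightarrow> z \<in> W \<Longrightarrow> adj v z \<Longrightarrow> g \<in> C \<Longrightarrow> mm (cls z) g \<in> gp_A V E G v \<longleftrightarrow> g \<in> gp_A V E G v"
proof -
  assume v: "v \<in> V" and z: "z \<in> W" and a: "adj v z" and g: "g \<in> C"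
  then obtain w where w: "w \<in> W" "g = cls w" by (auto simp: carrier_eq)
  have "mm (cls z) g = cls (z@w)" using w z by (simp add: mult_cls)
  moreover have "(vsplit v (nf (z@w)) = None) = (vsplit v (nf w) = None)"
    using Ff_st[OF a] by simp
  moreover have "z@w \<in> W" using z w by simp
  ultimately show ?thesis using A_iff[OF v, of "z@w"] A_iff[OF v w(1)] w(2) by simp
qed

lemma link_inv: "v \<in> V \<Longrightarrow> z \<in> W \<Longrightarrow> adj v z \<Longrightarrow> mm (cls z) ` gp_A V E G v = gp_A V E G v"
proof -
  interpret GPg: group GP by (rule GP_group)
  assume v: "v \<in> V" and z: "z \<in> W" and a: "adj v z"
  have zc: "cls z \<in> C" using z by (simp add: cls_in)
  show ?thesis
  proof
    show "mm (cls z) ` gp_A V E G v \<subseteq> gp_A V E G v" using link_sub[OF v z a] A_sub by auto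
  next
    show "gp_A V E G v \<subseteq> mm (cls z) ` gp_A V E G v"
    proof
      fix g assume g: "g \<in> gp_A V E G v"
      have gC: "g \<in> C" using g A_sub by auto
      have iz: "ginv (cls z) = cls (winv z)" using inv_cls z by simp
      have "mm (cls (winv z)) g \<in> gp_A V E G v"
        using link_sub[OF v winv_W[OF z] winv_adj[OF a] gC] g by simp
      then show "g \<in> mm (cls z) ` gp_A V E G v"
        using mem_trans[OF zc gC A_sub] iz by simp
    qed
  qed
qed

end


context gpx begin

lemma key:
  assumes v: "v \<in> V" and x: "x \<in> carrier (G v)" "x \<noteq> \<one>\<^bsub>G v\<^esub>" and u: "u \<in> V" and h: "h \<in> C"
    and hn: "h \<notin> gp_A V E G u" and hs: "mm h (cls [(v,x)]) \<in> gp_A V E G u"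
  shows "u = v \<and> mm (ginv h) ` gp_A V E G v = gp_A V E G v"
proof -
  interpret Gv: group "G v" using grp v by auto
  obtain z0 where z0: "z0 \<in> W" "h = cls z0" using h by (auto simp: carrier_eq)
  define z where "z = nf z0"
  have zW: "z \<in> W" and zS: "SRw z" using z0 nf_W nf_SR by (auto simp: z_def)
  have hz: "h = cls z" using z0 cls_nf by (simp add: z_def)
  have nfz: "nf z = z" using nf_SR_id[OF zS] .
  have zN: "vsplit u z = None"
  proof (rule ccontr)
    assume "vsplit u z \<noteq> None"
    then have "cls z \<in> gp_A V E G u" using A_iff[OF u zW] nfz by simp
    then show False using hn hz by simp
  qed
  have xW: "[(v,x)] \<in> W" using v x by simp
  have hs': "mm h (cls [(v,x)]) = cls (z@[(v,x)])" using hz mult_cls[OF zW xW] by simp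
  have zxW: "z@[(v,x)] \<in> W" using zW xW by simp
  show ?thesis
  proof (cases "\<exists>p y q. z = p@(v,y)#q \<and> adj v q")
    case True
    then obtain p y q where zz: "z = p@(v,y)#q" and aq: "adj v q" by blast
    have y: "y \<in> carrier (G v)" using zW zz by simp
    have st1: "(gp_step E G)\<^sup>*\<^sup>* (z@[(v,x)]) (p@[(v,y),(v,x)]@q)"
      using move_right_steps[OF aq, of "p@[(v,y)]" x "[]"] zz by simp
    have st2: "gp_step E G (p@[(v,y),(v,x)]@q) (p@[(v,y \<otimes>\<^bsub>G v\<^esub> x)]@q)" by (rule gp_step.merge)
    define t where "t = (if y \<otimes>\<^bsub>G v\<^esub> x = \<one>\<^bsub>G v\<^esub> then p@q else p@(v,y \<otimes>\<^bsub>G v\<^esub> x)#q)"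
    have st: "(gp_step E G)\<^sup>*\<^sup>* (z@[(v,x)]) t"
    proof (cases "y \<otimes>\<^bsub>G v\<^esub> x = \<one>\<^bsub>G v\<^esub>")
      case True
      have st3: "gp_step E G (p@[(v,y \<otimes>\<^bsub>G v\<^esub> x)]@q) (p@q)" unfolding True by (rule gp_step.delete)
      show ?thesis using st1 st2 st3 True by (simp add: t_def)
    next
      case False
      show ?thesis using st1 st2 False by (simp add: t_def)
    qed
    have eq: "cls (z@[(v,x)]) = cls t" using steps_eq[OF st zxW] cls_eqI by blast
    have tW: "t \<in> W" using steps_W[OF st zxW] .
    have tS: "SRw t"
      using SRw_del_right[OF aq] SRw_pattern zS zz by (auto simp: t_def)
    have "vsplit u t \<noteq> None" using hs hs' eq A_iff[OF u tW] nf_SR_id[OF tS] by simp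
    moreover have "vsplit u t = None"
    proof (cases "y \<otimes>\<^bsub>G v\<^esub> x = \<one>\<^bsub>G v\<^esub>")
      case False
      have "map fst t = map fst z" using False zz by (simp add: t_def)
      then show ?thesis using vsplit_map_fst zN by metis
    next
      case True
      have tt: "t = p@q" using True by (simp add: t_def)
      have zN': "vsplit u (p@(v,y)#q) = None" using zN zz by simp
      have "vsplit u q = None" if ap: "adj u p"
      proof (rule ccontr)
        assume qn: "vsplit u q \<noteq> None"
        then obtain y' where "(u,y') \<in> set q" using vsplit_mem by blast
        then have "E u v" using aq by (auto simp: adj_def)
        then have "E v u" "v \<noteq> u" using Esym Eirr by auto
        then show False using zN' ap qn by (simp add: vsplit_append)
      qed
      then show ?thesis using zN' tt by (auto simp: vsplit_append)
    qed
    ultimately show ?thesis by simp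
  next
    case False
    have S2: "SRw (z@[(v,x)])" using SRw_snoc[OF zS x(2) False] .
    have "vsplit u (z@[(v,x)]) \<noteq> None" using hs hs' A_iff[OF u zxW] nf_SR_id[OF S2] by simp
    then have au: "adj u z" and "vsplit u [(v,x)] \<noteq> None" using zN by (auto simp: vsplit_append)
    then have uv: "u = v" by (auto split: if_splits)
    have "ginv h = cls (winv z)" using inv_cls zW hz by simp
    then show ?thesis using link_inv[OF v winv_W[OF zW] winv_adj] au uv by simp
  qed
qed

lemma Wd_es:
  assumes v: "v \<in> V" and x: "x \<in> carrier (G v)" "x \<noteq> \<one>\<^bsub>G v\<^esub>"
  shows "Wd e (cls [(v,x)]) = {gp_A V E G v, mm (cls [(v,x)]) ` gp_A V E G v}
    \<and> gp_A V E G v \<noteq> mm (cls [(v,x)]) ` gp_A V E G v"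
proof -
  interpret Gv: group "G v" using grp v by auto
  define s where "s = cls [(v,x)]"
  have xW: "[(v,x)] \<in> W" using v x by simp
  have sC: "s \<in> C" using xW by (simp add: s_def cls_in)
  have ix1: "inv\<^bsub>G v\<^esub> x \<in> carrier (G v)" using x by simp
  have ix2: "inv\<^bsub>G v\<^esub> x \<noteq> \<one>\<^bsub>G v\<^esub>" using x by (metis Gv.inv_inv Gv.inv_one)
  note ix = ix1 ix2
  have is_: "ginv s = cls [(v, inv\<^bsub>G v\<^esub> x)]" using inv_cls[OF xW] by (simp add: s_def)
  have isA: "ginv s \<in> gp_A V E G v" using is_ s_in[OF v ix] by simp
  have sA: "s \<in> gp_A V E G v" using s_in[OF v x] by (simp add: s_def)
  have eA: "e \<notin> gp_A V E G v" using e_notin[OF v] .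
  have AC: "gp_A V E G v \<subseteq> C" by (rule A_sub)
  have e_in: "e \<in> mm s ` gp_A V E G v" using mem_trans[OF sC G_e AC] isA sC by simp
  have s_notin: "s \<notin> mm s ` gp_A V E G v" using mem_trans[OF sC sC AC] eA sC by simp
  have sub1: "Wd e s \<subseteq> {gp_A V E G v, mm s ` gp_A V E G v}"
  proof
    fix S assume "S \<in> Wd e s"
    then have SW: "S \<in> gp_walls V E G" and sep: "gp_separates S e s" by (auto simp: Wd_def)
    then obtain k u where S: "S = mm k ` gp_A V E G u" "k \<in> C" "u \<in> V" by (auto simp: gp_walls_def)
    have kC: "ginv k \<in> C" using S by simp
    have m1: "e \<in> S \<longleftrightarrow> ginv k \<in> gp_A V E G u" using mem_trans[OF S(2) G_e A_sub] S by simp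
    have m2: "s \<in> S \<longleftrightarrow> mm (ginv k) s \<in> gp_A V E G u" using mem_trans[OF S(2) sC A_sub] S by simp
    consider "ginv k \<notin> gp_A V E G u" "mm (ginv k) s \<in> gp_A V E G u"
      | "ginv k \<in> gp_A V E G u" "mm (ginv k) s \<notin> gp_A V E G u"
      using sep m1 m2 by (auto simp: gp_separates_def)
    then show "S \<in> {gp_A V E G v, mm s ` gp_A V E G v}"
    proof cases
      case 1
      from key[OF v x S(3) kC 1[unfolded s_def]] have "u = v" "mm k ` gp_A V E G v = gp_A V E G v"
        using S by auto
      then show ?thesis using S by simp
    next
      case 2
      define h' where "h' = mm (ginv k) s"
      have hC: "h' \<in> C" using kC sC by (simp add: h'_def)
      have "mm h' (ginv s) = ginv k" using kC sC by (simp add: h'_def G_assoc)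
      then have hs: "mm h' (cls [(v, inv\<^bsub>G v\<^esub> x)]) \<in> gp_A V E G u" using 2 is_ by simp
      from key[OF v ix S(3) hC _ hs] 2 have "u = v" "mm (ginv h') ` gp_A V E G v = gp_A V E G v"
        by (auto simp: h'_def)
      moreover have "ginv h' = mm (ginv s) k" using kC sC S(2) by (simp add: h'_def G_inv_mult)
      ultimately have eq: "mm (mm (ginv s) k) ` gp_A V E G v = gp_A V E G v" by simp
      have "mm k ` gp_A V E G v = mm (mm s (mm (ginv s) k)) ` gp_A V E G v"
        using sC S(2) by (simp add: G_cancel2)
      also have "\<dots> = mm s ` (mm (mm (ginv s) k) ` gp_A V E G v)"
        using img_comp[of s "mm (ginv s) k" "gp_A V E G v"] sC S(2) AC by simp
      also have "\<dots> = mm s ` gp_A V E G v" using eq by simp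
      finally show ?thesis using S \<open>u = v\<close> by simp
    qed
  qed
  have AeA: "mm e ` gp_A V E G v = gp_A V E G v"
    using AC by (auto simp: image_def subset_iff)
  have w1: "gp_A V E G v \<in> gp_walls V E G"
    unfolding gp_walls_def using v AeA G_e by (auto intro!: exI[of _ e] exI[of _ v])
  have w2: "mm s ` gp_A V E G v \<in> gp_walls V E G"
    unfolding gp_walls_def using v sC by auto
  have sub2: "{gp_A V E G v, mm s ` gp_A V E G v} \<subseteq> Wd e s"
    using w1 w2 eA sA e_in s_notin by (auto simp: Wd_def gp_separates_def)
  show ?thesis using sub1 sub2 e_in eA by (auto simp: s_def)
qed

lemma main_count: "w \<in> W \<Longrightarrow> SRw w \<Longrightarrow> finite (Wd e (cls w)) \<and> card (Wd e (cls w)) = 2 * length w"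
proof (induction w)
  case Nil
  then show ?case using Wd_self by (simp add: one_cls)
next
  case (Cons c w)
  obtain v x where c: "c = (v,x)" by (cases c)
  have v: "v \<in> V" and x: "x \<in> carrier (G v)" and w: "w \<in> W" using Cons.prems by (auto simp: c)
  have x1: "x \<noteq> \<one>\<^bsub>G v\<^esub>" and wN: "vsplit v w = None" and wS: "SRw w" using Cons.prems by (auto simp: c)
  define s where "s = cls [(v,x)]"
  define g' where "g' = cls w"
  have xW: "[(v,x)] \<in> W" using v x by simp
  have sC: "s \<in> C" and gC: "g' \<in> C" using xW w by (auto simp: s_def g'_def cls_in)
  have g: "cls (c#w) = mm s g'" using mult_cls[OF xW w] by (simp add: s_def g'_def c)
  define X where "X = Wd e s"
  define Y where "Y = Wd s (cls (c#w))"
  have Y: "Y = (\<lambda>S. mm s ` S) ` Wd e g'"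
    using Wd_trans[OF sC G_e gC] sC by (simp add: Y_def g)
  have XX: "X = {gp_A V E G v, mm s ` gp_A V E G v}" "gp_A V E G v \<noteq> mm s ` gp_A V E G v"
    using Wd_es[OF v x x1] by (auto simp: X_def s_def)
  have cwW: "c#w \<in> W" using Cons.prems by simp
  have sA: "s \<in> gp_A V E G v" using s_in[OF v x x1] by (simp add: s_def)
  have gA: "cls (c#w) \<in> gp_A V E G v"
    using A_iff[OF v cwW] nf_SR_id[OF Cons.prems(2)] by (simp add: c)
  have g'A: "g' \<notin> gp_A V E G v"
    using A_iff[OF v w] nf_SR_id[OF wS] wN by (simp add: g'_def)
  have n1: "gp_A V E G v \<notin> Y" using sA gA by (auto simp: Y_def Wd_def gp_separates_def)
  have n2: "mm s ` gp_A V E G v \<notin> Y"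
  proof
    assume "mm s ` gp_A V E G v \<in> Y"
    then have "gp_separates (mm s ` gp_A V E G v) (mm s e) (mm s g')"
      using sC by (simp add: Y_def Wd_def g)
    then have "gp_separates (gp_A V E G v) e g'" using sep_trans[OF sC G_e gC A_sub] by simp
    then show False using e_notin[OF v] g'A by (simp add: gp_separates_def)
  qed
  have disj: "X \<inter> Y = {}" using XX n1 n2 by auto
  have WW: "Wd e (cls (c#w)) = X \<union> Y"
    using Wd_split[of e "cls (c#w)" s] disj by (auto simp: X_def Y_def)
  have IH: "finite (Wd e g')" "card (Wd e g') = 2 * length w" using Cons.IH[OF w wS] by (auto simp: g'_def)
  have fY: "finite Y" using IH Y by simp
  have cY: "card Y = 2 * length w" using card_image[OF inj_img[OF sC]] IH Y by simp
  have fX: "finite X" and cX: "card X = 2" using XX by auto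
  show ?case using WW fX fY cX cY disj card_Un_disjoint[OF fX fY disj] by simp
qed

end

theorem mainTheorem11:
  fixes V :: "'v set" and E :: "'v \<Rightarrow> 'v \<Rightarrow> bool"
    and G :: "'v \<Rightarrow> ('g,'b) monoid_scheme"
  assumes "finite V"
    and "\<And>u v. E u v \<Longrightarrow> u \<in> V \<and> v \<in> V"
    and "\<And>u v. E u v \<Longrightarrow> E v u"
    and "\<And>v. \<not> E v v"
    and "\<And>v. v \<in> V \<Longrightarrow> group (G v)"
    and "g \<in> gp_carrier V E G"
  shows "finite {S \<in> gp_walls V E G. gp_separates S (gp_one V E G) g}
    \<and> gp_wall_dist V E G (gp_one V E G) g = 2 * gp_rlen E G g"
proof -
  interpret gpx V E G by (rule gpx.intro) (use assms in auto)
  obtain w0 where w0: "w0 \<in> gp_words V G" "g = cls w0" using assms(6) by (auto simp: carrier_eq)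
  define w where "w = nf w0"
  have wW: "w \<in> gp_words V G" and wS: "SRw w" using w0 nf_W nf_SR by (auto simp: w_def)
  have gw: "g = cls w" using w0 cls_nf by (simp add: w_def)
  have rl: "gp_rlen E G g = length w" using rlen_cls w0 by (simp add: w_def)
  show ?thesis using main_count[OF wW wS] gw rl by (simp add: Wd_def gp_wall_dist_def)
qed

end
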